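(* Let $f \in \mathrm{Inj}(\Omega)$ satisfy $(f)\mathrm{C}_{\mathrm{open}} + (f)\mathrm{C}_{\mathrm{fwd}} = 1$ and $(f)\mathrm{C}_n < \aleph_0$ for all $n \in \mathbb{Z}_+$, and let $h \in \mathrm{Fin}(\Omega)$ be a transposition. Then $$\sum_{n \in \mathbb{Z}_+} ((f)\mathrm{C}_n - (fh)\mathrm{C}_n) = \sum_{n \in \mathbb{Z}_+} ((f)\mathrm{C}_n - (hf)\mathrm{C}_n) \in \{-1,1\}$$ (only finitely many terms of each sum are nonzero).
   Context: $\Omega$ is a countably infinite set; maps are written on the right and composed left to right. $\mathrm{Inj}(\Omega)$ is the monoid of injective maps $\Omega\to\Omega$; $\mathrm{Fin}(\Omega)$ the permutations moving only finitely many points; a transposition swaps two distinct points and fixes all others. For $f\in\mathrm{Inj}(\Omega)$, a cycle of $f$ is a nonempty $\Sigma\subseteq\Omega$ such that (a) for all $\alpha\in\Omega$, $(\alpha)f\in\Sigma$ iff $\alpha\in\Sigma$, and (b) no proper nonempty subset of $\Sigma$ satisfies (a). A forward cycle is an infinite cycle $\Sigma$ with $\Sigma\setminus(\Omega)f\ne\emptyset$; an open cycle is an infinite cycle that is not forward. $(f)\mathrm{C}_n$ ($n\in\mathbb{Z}_+$) is the cardinal number of cycles of cardinality $n$; $(f)\mathrm{C}_{\mathrm{open}}$, $(f)\mathrm{C}_{\mathrm{fwd}}$ the numbers of open and forward cycles. *)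

theory Defs
  imports Main "HOL-Library.Countable" "HOL-Combinatorics.Transposition"
begin

text \<open>Omega is the (countably infinite) universe of the type 'a.
  Maps are written on the right in the paper, so the paper's product fh
  (first f, then h) is the HOL composition h o f.\<close>

definition is_cycle :: "('a \<Rightarrow> 'a) \<Rightarrow> 'a set \<Rightarrow> bool" where
  "is_cycle f S \<longleftrightarrow> S \<noteq> {} \<and> (\<forall>x. f x \<in> S \<longleftrightarrow> x \<in> S) \<and>
     \<not> (\<exists>T. T \<noteq> {} \<and> T \<subset> S \<and> (\<forall>x. f x \<in> T \<longleftrightarrow> x \<in> T))"

definition cycles_of_size :: "('a \<Rightarrow> 'a) \<Rightarrow> nat \<Rightarrow> 'a set set" where
  "cycles_of_size f n = {S. is_cycle f S \<and> finite S \<and> card S = n}"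

definition fwd_cycles :: "('a \<Rightarrow> 'a) \<Rightarrow> 'a set set" where
  "fwd_cycles f = {S. is_cycle f S \<and> infinite S \<and> S - range f \<noteq> {}}"

definition open_cycles :: "('a \<Rightarrow> 'a) \<Rightarrow> 'a set set" where
  "open_cycles f = {S. is_cycle f S \<and> infinite S \<and> S - range f = {}}"

end

theory Submission
  imports Defs
begin

definition crel :: "('a \<Rightarrow> 'a) \<Rightarrow> 'a \<Rightarrow> 'a \<Rightarrow> bool" where
  "crel f x y \<longleftrightarrow> (\<exists>m n. (f^^m) x = (f^^n) y)"
definition ccls :: "('a \<Rightarrow> 'a) \<Rightarrow> 'a \<Rightarrow> 'a set" where
  "ccls f x = {y. crel f x y}"
definition cclosed :: "('a \<Rightarrow> 'a) \<Rightarrow> 'a set \<Rightarrow> bool" where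
  "cclosed f T \<longleftrightarrow> (\<forall>x. f x \<in> T \<longleftrightarrow> x \<in> T)"

lemma cclosed_iter: "cclosed f T \<Longrightarrow> x \<in> T \<Longrightarrow> (f^^m) x \<in> T"
  by (induction m) (auto simp: cclosed_def)

lemma cclosed_iter_back: "cclosed f T \<Longrightarrow> (f^^n) y \<in> T \<Longrightarrow> y \<in> T"
proof (induction n arbitrary: y)
  case 0 then show ?case by simp
next
  case (Suc n)
  have "(f^^n) (f y) \<in> T" using Suc.prems(2) by (simp add: funpow_Suc_right del: funpow.simps)
  then have "f y \<in> T" using Suc by blast
  then show ?case using Suc.prems(1) by (auto simp: cclosed_def)
qed

lemma ccls_sub: "cclosed f T \<Longrightarrow> x \<in> T \<Longrightarrow> ccls f x \<subseteq> T"
proof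
  fix y assume T: "cclosed f T" "x \<in> T" and "y \<in> ccls f x"
  then obtain m n where "(f^^m) x = (f^^n) y" unfolding ccls_def crel_def by blast
  moreover have "(f^^m) x \<in> T" using cclosed_iter[OF T] .
  ultimately show "y \<in> T" using cclosed_iter_back[OF T(1)] by metis
qed

lemma ccls_self[simp]: "x \<in> ccls f x"
  unfolding ccls_def crel_def by blast

lemma crel_sym: "crel f x y \<Longrightarrow> crel f y x"
  unfolding crel_def by metis

lemma crel_trans: "crel f x y \<Longrightarrow> crel f y z \<Longrightarrow> crel f x z"
proof -
  assume "crel f x y" "crel f y z"
  then obtain m n p q where 1: "(f^^m) x = (f^^n) y" and 2: "(f^^p) y = (f^^q) z"
    unfolding crel_def by blast
  have "(f^^(p+m)) x = (f^^p) ((f^^m) x)" by (simp add: funpow_add)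
  also have "\<dots> = (f^^p) ((f^^n) y)" using 1 by simp
  also have "\<dots> = (f^^n) ((f^^p) y)" by (metis comp_apply funpow_add add.commute)
  also have "\<dots> = (f^^(n+q)) z" using 2 by (simp add: funpow_add)
  finally show ?thesis unfolding crel_def by blast
qed

lemma ccls_eq: "y \<in> ccls f x \<Longrightarrow> ccls f y = ccls f x"
  unfolding ccls_def by (auto intro: crel_trans crel_sym)

lemma ccls_closed: "cclosed f (ccls f x)"
  unfolding cclosed_def ccls_def crel_def
proof (intro allI iffI; simp)
  fix y assume "\<exists>m n. (f ^^ m) x = (f ^^ n) (f y)"
  then obtain m n where "(f ^^ m) x = (f ^^ n) (f y)" by blast
  then have "(f ^^ m) x = (f ^^ Suc n) y" by (simp add: funpow_Suc_right del: funpow.simps)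
  then show "\<exists>m n. (f ^^ m) x = (f ^^ n) y" by blast
next
  fix y assume "\<exists>m n. (f ^^ m) x = (f ^^ n) y"
  then obtain m n where "(f ^^ m) x = (f ^^ n) y" by blast
  then have "(f ^^ Suc m) x = (f ^^ n) (f y)"
    by (simp add: funpow_Suc_right del: funpow.simps) (metis comp_apply funpow_Suc_right funpow_swap1)
  then show "\<exists>m n. (f ^^ m) x = (f ^^ n) (f y)" by blast
qed

lemma is_cycle_iff: "is_cycle f S \<longleftrightarrow> (\<exists>x. S = ccls f x)"
proof
  assume H: "is_cycle f S"
  have ne0: "S \<noteq> {}" and cl0: "\<forall>x. f x \<in> S \<longleftrightarrow> x \<in> S"
    and nt: "\<not> (\<exists>T. T \<noteq> {} \<and> T \<subset> S \<and> (\<forall>x. f x \<in> T \<longleftrightarrow> x \<in> T))"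
    using H unfolding is_cycle_def by (meson conjunct1 conjunct2)+
  obtain x where x: "x \<in> S" using ne0 by auto
  have cl: "cclosed f S" unfolding cclosed_def by (rule cl0)
  have sub: "ccls f x \<subseteq> S" using ccls_sub[OF cl x] .
  have c2: "\<forall>y. f y \<in> ccls f x \<longleftrightarrow> y \<in> ccls f x" using ccls_closed[of f x] unfolding cclosed_def .
  have ne: "ccls f x \<noteq> {}" by (metis empty_iff ccls_self)
  have "\<not> ccls f x \<subset> S"
  proof
    assume "ccls f x \<subset> S"
    then have "\<exists>T. T \<noteq> {} \<and> T \<subset> S \<and> (\<forall>x. f x \<in> T \<longleftrightarrow> x \<in> T)"
      using c2 ne by (intro exI[of _ "ccls f x"]) simp
    then show False using nt by simp
  qed
  then have "S = ccls f x" using sub by auto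
  then show "\<exists>x. S = ccls f x" by (rule exI)
next
  assume "\<exists>x. S = ccls f x"
  then obtain x where S: "S = ccls f x" by (elim exE)
  show "is_cycle f S" unfolding is_cycle_def
  proof (intro conjI)
    show "S \<noteq> {}" using S by (metis empty_iff ccls_self)
    show "\<forall>y. f y \<in> S \<longleftrightarrow> y \<in> S" using ccls_closed[of f x] unfolding S cclosed_def .
    show "\<not> (\<exists>T. T \<noteq> {} \<and> T \<subset> S \<and> (\<forall>x. f x \<in> T \<longleftrightarrow> x \<in> T))"
    proof
      assume "\<exists>T. T \<noteq> {} \<and> T \<subset> S \<and> (\<forall>x. f x \<in> T \<longleftrightarrow> x \<in> T)"
      then obtain T where T0: "T \<noteq> {}" "T \<subset> S" "\<forall>x. f x \<in> T \<longleftrightarrow> x \<in> T" by (elim exE conjE)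
      obtain y where y: "y \<in> T" using T0(1) by auto
      have T3: "cclosed f T" unfolding cclosed_def by (rule T0(3))
      have "ccls f y \<subseteq> T" using ccls_sub[OF T3 y] .
      moreover have "y \<in> ccls f x" using y T0(2) S by auto
      then have "ccls f y = S" using S ccls_eq by simp
      ultimately show False using T0(2) by auto
    qed
  qed
qed


lemma transp_invol_comp: "transpose a b \<circ> (transpose a b \<circ> f) = f"
  by (simp add: fun_eq_iff)

lemma shared:
  assumes "a \<notin> ccls f x" "b \<notin> ccls f x"
  shows "ccls (transpose a b \<circ> f) x = ccls f x"
proof -
  define C where "C = ccls f x"
  define g where "g = transpose a b \<circ> f"
  have cf: "cclosed f C" unfolding C_def by (rule ccls_closed)
  have aC: "a \<notin> C" "b \<notin> C" using assms C_def by auto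
  have "cclosed g C" unfolding cclosed_def
  proof
    fix y
    have "g y \<in> C \<longleftrightarrow> f y \<in> C"
    proof (cases "f y = a \<or> f y = b")
      case True
      then have "g y = a \<or> g y = b" unfolding g_def by auto
      then show ?thesis using True aC by auto
    next
      case False
      then have "g y = f y" unfolding g_def by simp
      then show ?thesis by simp
    qed
    then show "g y \<in> C \<longleftrightarrow> y \<in> C" using cf unfolding cclosed_def by simp
  qed
  then have DC: "ccls g x \<subseteq> C" using ccls_sub[of g C x] C_def by simp
  have cg: "cclosed g (ccls g x)" by (rule ccls_closed)
  have "cclosed f (ccls g x)" unfolding cclosed_def
  proof (intro allI iffI)
    fix y assume "f y \<in> ccls g x"
    then have "f y \<noteq> a" "f y \<noteq> b" using DC aC by auto
    then have "g y = f y" unfolding g_def by simp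
    then have "g y \<in> ccls g x" using \<open>f y \<in> ccls g x\<close> by simp
    then show "y \<in> ccls g x" using cg unfolding cclosed_def by simp
  next
    fix y assume "y \<in> ccls g x"
    then have "g y \<in> ccls g x" using cg unfolding cclosed_def by simp
    then have "g y \<noteq> a" "g y \<noteq> b" using DC aC by auto
    then have "f y \<noteq> a" "f y \<noteq> b" unfolding g_def by auto
    then have "g y = f y" unfolding g_def by simp
    then show "f y \<in> ccls g x" using \<open>g y \<in> ccls g x\<close> by simp
  qed
  then have "C \<subseteq> ccls g x" using ccls_sub[of f "ccls g x" x] C_def by simp
  with DC show ?thesis unfolding C_def g_def by simp
qed

lemma union_sub:
  "ccls (transpose a b \<circ> f) a \<union> ccls (transpose a b \<circ> f) b \<subseteq> ccls f a \<union> ccls f b"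
proof
  fix y assume y: "y \<in> ccls (transpose a b \<circ> f) a \<union> ccls (transpose a b \<circ> f) b"
  show "y \<in> ccls f a \<union> ccls f b"
  proof (rule ccontr)
    assume n: "y \<notin> ccls f a \<union> ccls f b"
    have na: "a \<notin> ccls f y"
    proof
      assume "a \<in> ccls f y" then have "ccls f a = ccls f y" by (rule ccls_eq)
      then show False using n by (metis UnI1 ccls_self)
    qed
    have nb: "b \<notin> ccls f y"
    proof
      assume "b \<in> ccls f y" then have "ccls f b = ccls f y" by (rule ccls_eq)
      then show False using n by (metis UnI2 ccls_self)
    qed
    have e: "ccls (transpose a b \<circ> f) y = ccls f y" using shared[OF na nb] .
    from y show False
    proof
      assume "y \<in> ccls (transpose a b \<circ> f) a"
      then have "ccls (transpose a b \<circ> f) y = ccls (transpose a b \<circ> f) a" by (rule ccls_eq)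
      then have "a \<in> ccls f y" using e by (metis ccls_self)
      then show False using na by simp
    next
      assume "y \<in> ccls (transpose a b \<circ> f) b"
      then have "ccls (transpose a b \<circ> f) y = ccls (transpose a b \<circ> f) b" by (rule ccls_eq)
      then have "b \<in> ccls f y" using e by (metis ccls_self)
      then show False using nb by simp
    qed
  qed
qed

lemma union_eq:
  "ccls (transpose a b \<circ> f) a \<union> ccls (transpose a b \<circ> f) b = ccls f a \<union> ccls f b"
proof
  show "ccls (transpose a b \<circ> f) a \<union> ccls (transpose a b \<circ> f) b \<subseteq> ccls f a \<union> ccls f b"
    by (rule union_sub)
  show "ccls f a \<union> ccls f b \<subseteq> ccls (transpose a b \<circ> f) a \<union> ccls (transpose a b \<circ> f) b"
    using union_sub[of a b "transpose a b \<circ> f"] by (simp only: transp_invol_comp)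
qed

lemma cycle_avoid:
  assumes "a \<notin> S" "b \<notin> S"
  shows "is_cycle (transpose a b \<circ> f) S \<longleftrightarrow> is_cycle f S"
proof
  assume "is_cycle (transpose a b \<circ> f) S"
  then obtain x where S: "S = ccls (transpose a b \<circ> f) x" unfolding is_cycle_iff by blast
  have "ccls (transpose a b \<circ> (transpose a b \<circ> f)) x = ccls (transpose a b \<circ> f) x"
    using shared[of a "transpose a b \<circ> f" x b] assms S by simp
  then have "S = ccls f x" using S by (simp only: transp_invol_comp)
  then show "is_cycle f S" unfolding is_cycle_iff by blast
next
  assume "is_cycle f S"
  then obtain x where S: "S = ccls f x" unfolding is_cycle_iff by blast
  then have "S = ccls (transpose a b \<circ> f) x" using shared[of a f x b] assms by simp
  then show "is_cycle (transpose a b \<circ> f) S" unfolding is_cycle_iff by blast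
qed


lemma iter_agree:
  "(\<forall>j. 0 < j \<and> j \<le> m \<longrightarrow> ((f::'a\<Rightarrow>'a)^^j) x \<noteq> a \<and> (f^^j) x \<noteq> b) \<Longrightarrow>
   ((transpose a b \<circ> f)^^m) x = (f^^m) x"
proof (induction m)
  case 0 then show ?case by (simp only: funpow_0)
next
  case (Suc m)
  have "\<forall>j. 0 < j \<and> j \<le> m \<longrightarrow> (f^^j) x \<noteq> a \<and> (f^^j) x \<noteq> b" using Suc.prems by auto
  then have IH: "((transpose a b \<circ> f)^^m) x = (f^^m) x" by (rule Suc.IH)
  have ne: "(f^^Suc m) x \<noteq> a" "(f^^Suc m) x \<noteq> b" using Suc.prems by blast+
  have "((transpose a b \<circ> f)^^Suc m) x = transpose a b (f (((transpose a b \<circ> f)^^m) x))"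
    by (simp only: funpow.simps(2) comp_apply)
  also have "\<dots> = transpose a b ((f^^Suc m) x)" by (simp only: IH funpow.simps(2) comp_apply)
  also have "\<dots> = (f^^Suc m) x" using ne by simp
  finally show ?case .
qed

lemma funpow_mult_period: "(f^^k) x = x \<Longrightarrow> (f^^(i*k)) x = x"
proof (induction i)
  case 0 then show ?case by simp
next
  case (Suc i)
  have "(f^^(Suc i * k)) x = (f^^k) ((f^^(i*k)) x)" by (simp add: funpow_add)
  then show ?case using Suc by simp
qed

lemma funpow_mod_period: "(f^^k) x = x \<Longrightarrow> (f^^N) x = (f^^(N mod k)) x"
proof -
  assume p: "(f^^k) x = x"
  have "(f^^N) x = (f^^(N mod k + (N div k) * k)) x" by simp
  also have "\<dots> = (f^^(N mod k)) ((f^^((N div k) * k)) x)" by (simp only: funpow_add comp_apply)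
  also have "\<dots> = (f^^(N mod k)) x" using funpow_mult_period[OF p] by simp
  finally show ?thesis .
qed

lemma orbit_in_ccls: "(f^^j) x \<in> ccls f x"
  unfolding ccls_def crel_def mem_Collect_eq by (rule exI[of _ j], rule exI[of _ 0]) (simp only: funpow_0)

lemma periodic_ccls:
  assumes "inj f" "(f^^k) x = x" "0 < k"
  shows "ccls f x = (\<lambda>j. (f^^j) x) ` {..<k}"
proof
  show "(\<lambda>j. (f^^j) x) ` {..<k} \<subseteq> ccls f x"
    using orbit_in_ccls by auto
next
  show "ccls f x \<subseteq> (\<lambda>j. (f^^j) x) ` {..<k}"
  proof
    fix y assume "y \<in> ccls f x"
    then obtain m n where mn: "(f^^m) x = (f^^n) y" unfolding ccls_def crel_def by blast
    define M where "M = m + n * k"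
    have "n * 1 \<le> n * k" using assms(3) by (intro mult_le_mono2) simp
    then have "n \<le> M" unfolding M_def by linarith
    have "(f^^M) x = (f^^m) ((f^^(n*k)) x)" unfolding M_def by (simp add: funpow_add)
    also have "\<dots> = (f^^m) x" using funpow_mult_period[OF assms(2)] by simp
    finally have "(f^^M) x = (f^^n) y" using mn by simp
    moreover have "(f^^M) x = (f^^n) ((f^^(M-n)) x)"
      using \<open>n \<le> M\<close> by (metis comp_apply funpow_add le_add_diff_inverse)
    ultimately have "(f^^n) ((f^^(M-n)) x) = (f^^n) y" by simp
    then have "y = (f^^(M-n)) x" using inj_fn[OF assms(1), of n] by (auto dest: injD)
    also have "\<dots> = (f^^((M-n) mod k)) x" by (rule funpow_mod_period[OF assms(2)])
    finally show "y \<in> (\<lambda>j. (f^^j) x) ` {..<k}" using assms(3) by auto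
  qed
qed

lemma periodic_exists:
  assumes "inj f" "finite (ccls f x)"
  shows "\<exists>k>0. (f^^k) x = x"
proof -
  have "range (\<lambda>j. (f^^j) x) \<subseteq> ccls f x"
    using orbit_in_ccls by auto
  then have "finite (range (\<lambda>j. (f^^j) x))" using assms(2) finite_subset by auto
  then have "\<not> inj (\<lambda>j. (f^^j) x)" using finite_imageD infinite_UNIV_nat by auto
  then obtain i j where ij: "i \<noteq> j" "(f^^i) x = (f^^j) x" unfolding inj_def by auto
  have "\<exists>i j. i < j \<and> (f^^i) x = (f^^j) x"
    using ij by (metis linorder_neqE_nat)
  then obtain i j where ij: "i < j" "(f^^i) x = (f^^j) x" by auto
  have "(f^^j) x = (f^^i) ((f^^(j-i)) x)"
    using ij(1) by (metis comp_apply funpow_add le_add_diff_inverse less_imp_le)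
  then have "(f^^i) ((f^^(j-i)) x) = (f^^i) x" using ij by simp
  then have "(f^^(j-i)) x = x" using inj_fn[OF assms(1), of i] by (auto dest: injD)
  then show ?thesis using ij(1) by (intro exI[of _ "j-i"]) simp
qed


lemma g_apply: "(transpose a b \<circ> f) y = transpose a b (f y)" by simp

lemma funpow_pred: "0 < k \<Longrightarrow> ((g::'a\<Rightarrow>'a)^^k) x = g ((g^^(k-1)) x)"
  by (metis Suc_pred' comp_apply funpow.simps(2))

lemma fwd_case:
  fixes f :: "'a \<Rightarrow> 'a"
  assumes inj: "inj f" and ab: "a \<noteq> b" and k: "(f^^k) a = b"
  shows "finite (ccls (transpose a b \<circ> f) a) \<and> b \<notin> ccls (transpose a b \<circ> f) a"
proof -
  define g where "g = transpose a b \<circ> f"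
  have gapp: "\<And>y. g y = transpose a b (f y)" unfolding g_def by simp
  define k0 where "k0 = (LEAST k. (f^^k) a = b)"
  have k0b: "(f^^k0) a = b" unfolding k0_def using k by (rule LeastI)
  have k0pos: "0 < k0" using k0b ab by (cases k0) auto
  have notb: "\<And>j. j < k0 \<Longrightarrow> (f^^j) a \<noteq> b" unfolding k0_def using not_less_Least by blast
  have nota: "\<And>j. 0 < j \<Longrightarrow> j < k0 \<Longrightarrow> (f^^j) a \<noteq> a"
  proof
    fix j assume j: "0 < j" "j < k0" and e: "(f^^j) a = a"
    have "(f^^k0) a = (f^^(k0-j)) ((f^^j) a)" using j
      by (metis comp_apply funpow_add le_add_diff_inverse2 less_imp_le)
    then have "(f^^(k0-j)) a = b" using e k0b by simp
    then show False using notb[of "k0-j"] j by simp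
  qed
  have agree: "\<And>j. j \<le> k0 - 1 \<Longrightarrow> (g^^j) a = (f^^j) a"
  proof -
    fix j assume j: "j \<le> k0 - 1"
    have "\<forall>i. 0 < i \<and> i \<le> j \<longrightarrow> (f^^i) a \<noteq> a \<and> (f^^i) a \<noteq> b"
    proof (intro allI impI)
      fix i assume i: "0 < i \<and> i \<le> j"
      then have "i < k0" using j k0pos by linarith
      then show "(f^^i) a \<noteq> a \<and> (f^^i) a \<noteq> b" using nota[of i] notb[of i] i by blast
    qed
    then show "(g^^j) a = (f^^j) a" unfolding g_def by (rule iter_agree)
  qed
  have per: "(g^^k0) a = a"
  proof -
    have "(g^^k0) a = g ((g^^(k0-1)) a)" using k0pos by (rule funpow_pred)
    also have "\<dots> = transpose a b (f ((f^^(k0-1)) a))" using agree[of "k0-1"] gapp by simp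
    also have "f ((f^^(k0-1)) a) = b" using k0b k0pos funpow_pred[of k0 f a] by simp
    finally show ?thesis by simp
  qed
  have injg: "inj g" unfolding g_def using inj by (simp add: inj_compose inj_transpose)
  have C: "ccls g a = (\<lambda>j. (g^^j) a) ` {..<k0}" by (rule periodic_ccls[OF injg per k0pos])
  have "b \<notin> ccls g a"
  proof
    assume "b \<in> ccls g a" then obtain j where j: "j < k0" "b = (g^^j) a" using C by auto
    then have "b = (f^^j) a" using agree[of j] by simp
    then show False using notb[of j] j by simp
  qed
  then show ?thesis using C unfolding g_def by simp
qed

lemma sep_case:
  fixes f :: "'a \<Rightarrow> 'a"
  assumes inj: "inj f" and nb: "b \<notin> ccls f a" and fin: "finite (ccls f a)"
  shows "b \<in> ccls (transpose a b \<circ> f) a"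
proof -
  define g where "g = transpose a b \<circ> f"
  have gapp: "\<And>y. g y = transpose a b (f y)" unfolding g_def by simp
  obtain k where k: "0 < k" "(f^^k) a = a" using periodic_exists[OF inj fin] by auto
  define k0 where "k0 = (LEAST k. 0 < k \<and> (f^^k) a = a)"
  have k0: "0 < k0 \<and> (f^^k0) a = a" unfolding k0_def by (rule LeastI[of _ k]) (use k in simp)
  have mina: "\<And>j. 0 < j \<Longrightarrow> j < k0 \<Longrightarrow> (f^^j) a \<noteq> a"
    unfolding k0_def using not_less_Least by blast
  have notb: "\<And>j. (f^^j) a \<noteq> b" using orbit_in_ccls nb by metis
  have agree: "\<And>j. j \<le> k0 - 1 \<Longrightarrow> (g^^j) a = (f^^j) a"
  proof -
    fix j assume j: "j \<le> k0 - 1"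
    have "\<forall>i. 0 < i \<and> i \<le> j \<longrightarrow> (f^^i) a \<noteq> a \<and> (f^^i) a \<noteq> b"
      using j k0 mina notb by auto
    then show "(g^^j) a = (f^^j) a" unfolding g_def by (rule iter_agree)
  qed
  have "(g^^k0) a = b"
  proof -
    have "(g^^k0) a = g ((g^^(k0-1)) a)" using k0 by (intro funpow_pred) simp
    also have "\<dots> = transpose a b (f ((f^^(k0-1)) a))" using agree[of "k0-1"] gapp by simp
    also have "f ((f^^(k0-1)) a) = a" using k0 funpow_pred[of k0 f a] by simp
    finally show ?thesis by simp
  qed
  then have "(g^^k0) a = (g^^0) b" by simp
  then have "b \<in> ccls g a" unfolding ccls_def crel_def by blast
  then show ?thesis unfolding g_def .
qed

definition nf :: "'a set \<Rightarrow> int" where "nf S = (if finite S then 1 else 0)"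

lemma card2: "int (card {S \<in> {X, Y}. finite S}) = (if X = Y then nf X else nf X + nf Y)"
proof -
  have e: "{S \<in> {X, Y}. finite S} = (if finite X then {X} else {}) \<union> (if finite Y then {Y} else {})"
    by auto
  show ?thesis unfolding e
    by (cases "finite X"; cases "finite Y"; cases "X = Y") (simp_all add: nf_def)
qed


lemma D_case:
  fixes f :: "'a \<Rightarrow> 'a"
  assumes inj: "inj f" and ab: "a \<noteq> b"
    and H: "(\<exists>k. (f^^k) a = b) \<or> (b \<notin> ccls f a \<and> finite (ccls f a))"
  shows "int (card {S \<in> {ccls f a, ccls f b}. finite S})
       - int (card {S \<in> {ccls (transpose a b \<circ> f) a, ccls (transpose a b \<circ> f) b}. finite S}) \<in> {-1, 1}"
proof -
  define g where "g = transpose a b \<circ> f"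
  have U: "ccls g a \<union> ccls g b = ccls f a \<union> ccls f b" unfolding g_def by (rule union_eq)
  from H show ?thesis
  proof
    assume "\<exists>k. (f^^k) a = b"
    then obtain k where k: "(f^^k) a = b" by blast
    have fc: "finite (ccls g a)" "b \<notin> ccls g a" using fwd_case[OF inj ab k] unfolding g_def by auto
    have "b \<in> ccls f a" using orbit_in_ccls[where f=f and j=k and x=a] k by simp
    then have fb: "ccls f b = ccls f a" by (rule ccls_eq)
    have ne: "ccls g a \<noteq> ccls g b" using fc(2) ccls_self[where x=b and f=g] by auto
    have U2: "ccls g a \<union> ccls g b = ccls f a" using U fb by simp
    have "finite (ccls g b) \<longleftrightarrow> finite (ccls f a)"
      using U2 fc(1) by (metis finite_Un)
    then have "nf (ccls g b) = nf (ccls f a)" unfolding nf_def by simp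
    moreover have "nf (ccls g a) = 1" using fc(1) unfolding nf_def by simp
    ultimately show ?thesis using ne unfolding g_def[symmetric] card2 fb by simp
  next
    assume A: "b \<notin> ccls f a \<and> finite (ccls f a)"
    have bg: "b \<in> ccls g a" using sep_case[OF inj] A unfolding g_def by simp
    then have gb: "ccls g b = ccls g a" by (rule ccls_eq)
    have ne: "ccls f a \<noteq> ccls f b" using A ccls_self[where x=b and f=f] by auto
    have U2: "ccls g a = ccls f a \<union> ccls f b" using U gb by simp
    have "finite (ccls g a) \<longleftrightarrow> finite (ccls f b)" using U2 A by simp
    then have "nf (ccls g a) = nf (ccls f b)" unfolding nf_def by simp
    moreover have "nf (ccls f a) = 1" using A unfolding nf_def by simp
    ultimately show ?thesis using ne unfolding g_def[symmetric] card2 gb by simp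
  qed
qed

lemma E_case:
  fixes f :: "'a \<Rightarrow> 'a"
  assumes inj: "inj f" and ab: "a \<noteq> b"
    and one: "\<And>x y. infinite (ccls f x) \<Longrightarrow> infinite (ccls f y) \<Longrightarrow> ccls f x = ccls f y"
  shows "int (card {S \<in> {ccls f a, ccls f b}. finite S})
       - int (card {S \<in> {ccls (transpose a b \<circ> f) a, ccls (transpose a b \<circ> f) b}. finite S}) \<in> {-1, 1}"
proof -
  have sym: "int (card {S \<in> {ccls f a, ccls f b}. finite S})
       - int (card {S \<in> {ccls (transpose a b \<circ> f) a, ccls (transpose a b \<circ> f) b}. finite S}) \<in> {-1, 1}"
    if "(\<exists>k. (f^^k) b = a) \<or> (a \<notin> ccls f b \<and> finite (ccls f b))"
  proof -
    have "int (card {S \<in> {ccls f b, ccls f a}. finite S})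
       - int (card {S \<in> {ccls (transpose b a \<circ> f) b, ccls (transpose b a \<circ> f) a}. finite S}) \<in> {-1, 1}"
      using D_case[OF inj _ that] ab by auto
    moreover have "{ccls f b, ccls f a} = {ccls f a, ccls f b}" by (rule insert_commute)
    moreover have "{ccls (transpose a b \<circ> f) b, ccls (transpose a b \<circ> f) a}
        = {ccls (transpose a b \<circ> f) a, ccls (transpose a b \<circ> f) b}" by (rule insert_commute)
    moreover have "transpose b a = transpose a b" by (rule transpose_commute)
    ultimately show ?thesis by (simp only:)
  qed
  show ?thesis
  proof (cases "b \<in> ccls f a")
    case True
    then obtain m n where mn: "(f^^m) a = (f^^n) b" unfolding ccls_def crel_def by blast
    show ?thesis
    proof (cases "n \<le> m")
      case True
      have "(f^^m) a = (f^^n) ((f^^(m-n)) a)" using True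
        by (metis comp_apply funpow_add le_add_diff_inverse)
      then have "(f^^(m-n)) a = b" using mn inj_fn[OF inj, of n] by (auto dest: injD)
      then show ?thesis using D_case[OF inj ab] by blast
    next
      case False
      have "(f^^n) b = (f^^m) ((f^^(n-m)) b)" using False
        by (metis comp_apply funpow_add le_add_diff_inverse nat_le_linear)
      then have "(f^^(n-m)) b = a" using mn inj_fn[OF inj, of m] by (auto dest: injD)
      then show ?thesis using sym by blast
    qed
  next
    case False
    have na: "a \<notin> ccls f b"
    proof
      assume "a \<in> ccls f b" then have "ccls f a = ccls f b" by (rule ccls_eq)
      then show False using False ccls_self[where x=b and f=f] by simp
    qed
    have ne: "ccls f a \<noteq> ccls f b" using False ccls_self[where x=b and f=f] by auto
    show ?thesis
    proof (cases "finite (ccls f a)")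
      case True
      then show ?thesis using D_case[OF inj ab] False by blast
    next
      case F2: False
      then have "finite (ccls f b)" using one ne by blast
      then show ?thesis using sym na by blast
    qed
  qed
qed


lemma conj_iter:
  fixes h p :: "'a \<Rightarrow> 'a"
  assumes hh: "\<And>y. h (h y) = y"
  shows "((h \<circ> p \<circ> h)^^m) x = h ((p^^m) (h x))"
proof (induction m arbitrary: x)
  case 0 then show ?case using hh by simp
next
  case (Suc m)
  have "((h \<circ> p \<circ> h)^^Suc m) x = (h \<circ> p \<circ> h) (((h \<circ> p \<circ> h)^^m) x)"
    by (simp only: funpow.simps(2) comp_apply)
  also have "\<dots> = h (p (h (h ((p^^m) (h x)))))" by (simp only: Suc.IH comp_apply)
  also have "\<dots> = h ((p^^Suc m) (h x))" using hh by simp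
  finally show ?case .
qed

lemma conj_ccls:
  fixes h p :: "'a \<Rightarrow> 'a"
  assumes hh: "\<And>y. h (h y) = y"
  shows "ccls (h \<circ> p \<circ> h) x = h ` ccls p (h x)"
proof -
  have injh: "inj h" by (metis hh injI)
  have "y \<in> ccls (h \<circ> p \<circ> h) x \<longleftrightarrow> h y \<in> ccls p (h x)" for y
  proof -
    have "y \<in> ccls (h \<circ> p \<circ> h) x \<longleftrightarrow> (\<exists>m n. h ((p^^m) (h x)) = h ((p^^n) (h y)))"
      unfolding ccls_def crel_def mem_Collect_eq conj_iter[OF hh] ..
    also have "\<dots> \<longleftrightarrow> (\<exists>m n. (p^^m) (h x) = (p^^n) (h y))" using injh by (metis injD)
    finally show ?thesis unfolding ccls_def crel_def by simp
  qed
  then show ?thesis using hh by (auto simp: image_iff) (metis)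
qed

lemma cycles_conj:
  fixes f :: "'a \<Rightarrow> 'a"
  shows "cycles_of_size (transpose a b \<circ> f) n
       = image (transpose a b) ` cycles_of_size (f \<circ> transpose a b) n"
proof -
  define h where "h = transpose a b"
  have hh: "\<And>y. h (h y) = y" unfolding h_def by simp
  have injh: "inj h" unfolding h_def by (rule inj_transpose)
  have eq: "h \<circ> (f \<circ> h) \<circ> h = h \<circ> f" using hh by (auto simp: fun_eq_iff)
  have C: "\<And>x. ccls (h \<circ> f) x = h ` ccls (f \<circ> h) (h x)"
    using conj_ccls[OF hh, of "f \<circ> h"] eq by simp
  have fc: "\<And>T. finite (h ` T) \<longleftrightarrow> finite T" using injh by (simp add: finite_image_iff inj_on_subset)
  have cc: "\<And>T. card (h ` T) = card T" using injh by (simp add: card_image inj_on_subset)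
  show ?thesis unfolding h_def[symmetric] cycles_of_size_def
  proof
    show "{S. is_cycle (h \<circ> f) S \<and> finite S \<and> card S = n}
      \<subseteq> (`) h ` {S. is_cycle (f \<circ> h) S \<and> finite S \<and> card S = n}"
    proof
      fix S assume "S \<in> {S. is_cycle (h \<circ> f) S \<and> finite S \<and> card S = n}"
      then obtain x where S: "S = ccls (h \<circ> f) x" "finite S" "card S = n"
        unfolding is_cycle_iff by auto
      define T where "T = ccls (f \<circ> h) (h x)"
      have "S = h ` T" using S C T_def by simp
      moreover have "is_cycle (f \<circ> h) T" unfolding is_cycle_iff T_def by blast
      moreover have "finite T" using S(2) \<open>S = h ` T\<close> fc by simp
      moreover have "card T = n" using S(3) \<open>S = h ` T\<close> cc by simp
      ultimately show "S \<in> (`) h ` {S. is_cycle (f \<circ> h) S \<and> finite S \<and> card S = n}" by blast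
    qed
  next
    show "(`) h ` {S. is_cycle (f \<circ> h) S \<and> finite S \<and> card S = n}
      \<subseteq> {S. is_cycle (h \<circ> f) S \<and> finite S \<and> card S = n}"
    proof
      fix S assume "S \<in> (`) h ` {S. is_cycle (f \<circ> h) S \<and> finite S \<and> card S = n}"
      then obtain T y where T: "S = h ` T" "T = ccls (f \<circ> h) y" "finite T" "card T = n"
        unfolding is_cycle_iff by auto
      have "S = ccls (h \<circ> f) (h y)" using C[of "h y"] hh T by simp
      moreover have "finite S" using T(1,3) fc by simp
      moreover have "card S = n" using T(1,4) cc by simp
      ultimately show "S \<in> {S. is_cycle (h \<circ> f) S \<and> finite S \<and> card S = n}"
        unfolding is_cycle_iff by blast
    qed
  qed
qed

lemma cycles_conj_card:
  fixes f :: "'a \<Rightarrow> 'a"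
  shows "card (cycles_of_size (transpose a b \<circ> f) n) = card (cycles_of_size (f \<circ> transpose a b) n)"
    and "finite (cycles_of_size (transpose a b \<circ> f) n) \<longleftrightarrow> finite (cycles_of_size (f \<circ> transpose a b) n)"
proof -
  have inj: "inj_on (image (transpose a b)) X" for X
    by (rule inj_onI) (simp add: inj_image_eq_iff inj_transpose)
  show "card (cycles_of_size (transpose a b \<circ> f) n) = card (cycles_of_size (f \<circ> transpose a b) n)"
    unfolding cycles_conj by (rule card_image[OF inj])
  show "finite (cycles_of_size (transpose a b \<circ> f) n) \<longleftrightarrow> finite (cycles_of_size (f \<circ> transpose a b) n)"
    unfolding cycles_conj using finite_image_iff[OF inj] by blast
qed

lemma split_cycles:
  fixes f :: "'a \<Rightarrow> 'a"
  shows "cycles_of_size f n = {S. is_cycle f S \<and> finite S \<and> card S = n \<and> a \<notin> S \<and> b \<notin> S}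
     \<union> {S \<in> {ccls f a, ccls f b}. finite S \<and> card S = n}"
proof
  show "cycles_of_size f n \<subseteq> {S. is_cycle f S \<and> finite S \<and> card S = n \<and> a \<notin> S \<and> b \<notin> S}
     \<union> {S \<in> {ccls f a, ccls f b}. finite S \<and> card S = n}"
  proof
    fix S assume "S \<in> cycles_of_size f n"
    then obtain x where S: "S = ccls f x" "finite S" "card S = n" "is_cycle f S"
      unfolding cycles_of_size_def is_cycle_iff by auto
    have "a \<in> S \<Longrightarrow> S = ccls f a" using S ccls_eq by metis
    moreover have "b \<in> S \<Longrightarrow> S = ccls f b" using S ccls_eq by metis
    ultimately show "S \<in> {S. is_cycle f S \<and> finite S \<and> card S = n \<and> a \<notin> S \<and> b \<notin> S}
     \<union> {S \<in> {ccls f a, ccls f b}. finite S \<and> card S = n}" using S by blast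
  qed
  show "{S. is_cycle f S \<and> finite S \<and> card S = n \<and> a \<notin> S \<and> b \<notin> S}
     \<union> {S \<in> {ccls f a, ccls f b}. finite S \<and> card S = n} \<subseteq> cycles_of_size f n"
    unfolding cycles_of_size_def is_cycle_iff by auto
qed

lemma card_split:
  fixes f :: "'a \<Rightarrow> 'a"
  assumes "finite (cycles_of_size f n)"
  shows "card (cycles_of_size f n) = card {S. is_cycle f S \<and> finite S \<and> card S = n \<and> a \<notin> S \<and> b \<notin> S}
     + card {S \<in> {ccls f a, ccls f b}. finite S \<and> card S = n}"
proof -
  have fin: "finite {S. is_cycle f S \<and> finite S \<and> card S = n \<and> a \<notin> S \<and> b \<notin> S}"
    using assms by (rule finite_subset[rotated]) (auto simp: cycles_of_size_def)
  have dis: "{S. is_cycle f S \<and> finite S \<and> card S = n \<and> a \<notin> S \<and> b \<notin> S}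
     \<inter> {S \<in> {ccls f a, ccls f b}. finite S \<and> card S = n} = {}"
    using ccls_self[where x=a and f=f] ccls_self[where x=b and f=f] by auto
  show ?thesis unfolding split_cycles[of f n a b]
    by (rule card_Un_disjoint[OF fin _ dis]) simp
qed

lemma fiber_sum:
  assumes "finite A" "finite K" "\<forall>S\<in>A. \<phi> S \<in> K"
  shows "(\<Sum>n\<in>K. card {S\<in>A. \<phi> S = n}) = card A"
proof -
  have "A = (\<Union>n\<in>K. {S\<in>A. \<phi> S = n})" using assms(3) by auto
  moreover have "card (\<Union>n\<in>K. {S\<in>A. \<phi> S = n}) = (\<Sum>n\<in>K. card {S\<in>A. \<phi> S = n})"
    by (rule card_UN_disjoint) (use assms in auto)
  ultimately show ?thesis by simp
qed


theorem mainTheorem16: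
  fixes f :: "'a::countable \<Rightarrow> 'a" and a b :: 'a
  assumes "infinite (UNIV :: 'a set)"
    and "inj f"
    and "finite (open_cycles f)" and "finite (fwd_cycles f)"
    and "card (open_cycles f) + card (fwd_cycles f) = 1"
    and "\<forall>n>0. finite (cycles_of_size f n)"
    and "a \<noteq> b"
  shows "(\<forall>n>0. finite (cycles_of_size (transpose a b \<circ> f) n)
                \<and> finite (cycles_of_size (f \<circ> transpose a b) n))
     \<and> finite {n. n > 0 \<and> card (cycles_of_size f n) \<noteq> card (cycles_of_size (transpose a b \<circ> f) n)}
     \<and> finite {n. n > 0 \<and> card (cycles_of_size f n) \<noteq> card (cycles_of_size (f \<circ> transpose a b) n)}
     \<and> (\<Sum>n\<in>{n. n > 0 \<and> card (cycles_of_size f n) \<noteq> card (cycles_of_size (transpose a b \<circ> f) n)}.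
           int (card (cycles_of_size f n)) - int (card (cycles_of_size (transpose a b \<circ> f) n)))
       = (\<Sum>n\<in>{n. n > 0 \<and> card (cycles_of_size f n) \<noteq> card (cycles_of_size (f \<circ> transpose a b) n)}.
           int (card (cycles_of_size f n)) - int (card (cycles_of_size (f \<circ> transpose a b) n)))
     \<and> (\<Sum>n\<in>{n. n > 0 \<and> card (cycles_of_size f n) \<noteq> card (cycles_of_size (transpose a b \<circ> f) n)}.
           int (card (cycles_of_size f n)) - int (card (cycles_of_size (transpose a b \<circ> f) n)))
       \<in> {-1, 1}"
proof -
  define g where "g = transpose a b \<circ> f"
  have inj: "inj f" by (rule assms(2))
  have one: "ccls f x = ccls f y" if "infinite (ccls f x)" "infinite (ccls f y)" for x y
  proof -
    have dis: "open_cycles f \<inter> fwd_cycles f = {}" by (auto simp: open_cycles_def fwd_cycles_def)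
    have "card (open_cycles f \<union> fwd_cycles f) = 1"
      using card_Un_disjoint[OF assms(3,4) dis] assms(5) by simp
    then obtain T where T: "open_cycles f \<union> fwd_cycles f = {T}" by (rule card_1_singletonE)
    have "ccls f x \<in> open_cycles f \<union> fwd_cycles f" "ccls f y \<in> open_cycles f \<union> fwd_cycles f"
      using that unfolding open_cycles_def fwd_cycles_def is_cycle_iff by blast+
    then show ?thesis using T by simp
  qed
  define Of where "Of n = {S. is_cycle f S \<and> finite S \<and> card S = n \<and> a \<notin> S \<and> b \<notin> S}" for n
  have Og: "{S. is_cycle g S \<and> finite S \<and> card S = n \<and> a \<notin> S \<and> b \<notin> S} = Of n" for n
    unfolding Of_def g_def using cycle_avoid[of a _ b f] by blast
  define F where "F n = {S \<in> {ccls f a, ccls f b}. finite S \<and> card S = n}" for n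
  define G where "G n = {S \<in> {ccls g a, ccls g b}. finite S \<and> card S = n}" for n
  have finF: "finite (F n)" "finite (G n)" for n unfolding F_def G_def by auto
  have finf: "finite (cycles_of_size f n)" if "0 < n" for n using assms(6) that by blast
  have finO: "finite (Of n)" if "0 < n" for n
    using finf[OF that] by (rule finite_subset[rotated]) (auto simp: cycles_of_size_def Of_def)
  have fing: "finite (cycles_of_size g n)" if "0 < n" for n
    using split_cycles[of g n a b] Og[of n] finO[OF that] finF(2)[of n] unfolding G_def by simp
  have cf: "card (cycles_of_size f n) = card (Of n) + card (F n)" if "0 < n" for n
    using card_split[OF finf[OF that], of a b] unfolding Of_def F_def by simp
  have cg: "card (cycles_of_size g n) = card (Of n) + card (G n)" if "0 < n" for n
    using card_split[OF fing[OF that], of a b] Og[of n] unfolding G_def by simp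
  have diff: "int (card (cycles_of_size f n)) - int (card (cycles_of_size g n))
      = int (card (F n)) - int (card (G n))" if "0 < n" for n
    using cf[OF that] cg[OF that] by simp
  have cg': "card (cycles_of_size g n) = card (cycles_of_size (f \<circ> transpose a b) n)" for n
    unfolding g_def by (rule cycles_conj_card(1))
  have fg': "finite (cycles_of_size g n) \<longleftrightarrow> finite (cycles_of_size (f \<circ> transpose a b) n)" for n
    unfolding g_def by (rule cycles_conj_card(2))
  define Q where "Q = {ccls f a, ccls f b, ccls g a, ccls g b}"
  define K where "K = {n. 0 < n \<and> (\<exists>S\<in>Q. finite S \<and> card S = n)}"
  have finK: "finite K"
  proof (rule finite_subset)
    show "K \<subseteq> card ` Q" unfolding K_def by auto
    show "finite (card ` Q)" unfolding Q_def by simp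
  qed
  define Sup where "Sup = {n. n > 0 \<and> card (cycles_of_size f n) \<noteq> card (cycles_of_size g n)}"
  have SupK: "Sup \<subseteq> K"
  proof
    fix n assume "n \<in> Sup"
    then have n: "0 < n" "card (cycles_of_size f n) \<noteq> card (cycles_of_size g n)" unfolding Sup_def by auto
    then have "F n \<noteq> {} \<or> G n \<noteq> {}" using cf cg by fastforce
    then show "n \<in> K" unfolding K_def Q_def F_def G_def using n(1) by blast
  qed
  have finSup: "finite Sup" using finite_subset[OF SupK finK] .
  have Sup': "{n. n > 0 \<and> card (cycles_of_size f n) \<noteq> card (cycles_of_size (f \<circ> transpose a b) n)} = Sup"
    unfolding Sup_def cg' ..
  have pos: "0 < card S" if "S \<in> {ccls p a, ccls p b}" "finite S" for S and p :: "'a \<Rightarrow> 'a"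
    using that ccls_self[where x=a and f=p] ccls_self[where x=b and f=p] card_gt_0_iff by blast
  have sumF: "(\<Sum>n\<in>K. int (card (F n))) = int (card {S \<in> {ccls f a, ccls f b}. finite S})"
  proof -
    have "(\<Sum>n\<in>K. card {S \<in> {S \<in> {ccls f a, ccls f b}. finite S}. card S = n})
        = card {S \<in> {ccls f a, ccls f b}. finite S}"
      by (rule fiber_sum) (use pos in \<open>auto simp: K_def Q_def\<close>)
    moreover have "{S \<in> {S \<in> {ccls f a, ccls f b}. finite S}. card S = n} = F n" for n
      unfolding F_def by auto
    ultimately show ?thesis by (simp flip: of_nat_sum)
  qed
  have sumG: "(\<Sum>n\<in>K. int (card (G n))) = int (card {S \<in> {ccls g a, ccls g b}. finite S})"
  proof -
    have "(\<Sum>n\<in>K. card {S \<in> {S \<in> {ccls g a, ccls g b}. finite S}. card S = n})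
        = card {S \<in> {ccls g a, ccls g b}. finite S}"
      by (rule fiber_sum) (use pos in \<open>auto simp: K_def Q_def\<close>)
    moreover have "{S \<in> {S \<in> {ccls g a, ccls g b}. finite S}. card S = n} = G n" for n
      unfolding G_def by auto
    ultimately show ?thesis by (simp flip: of_nat_sum)
  qed
  have "(\<Sum>n\<in>Sup. int (card (cycles_of_size f n)) - int (card (cycles_of_size g n)))
      = (\<Sum>n\<in>K. int (card (cycles_of_size f n)) - int (card (cycles_of_size g n)))"
    by (rule sum.mono_neutral_left[OF finK SupK]) (auto simp: Sup_def K_def)
  also have "\<dots> = (\<Sum>n\<in>K. int (card (F n)) - int (card (G n)))"
    by (rule sum.cong) (auto simp: K_def diff)
  also have "\<dots> = int (card {S \<in> {ccls f a, ccls f b}. finite S}) - int (card {S \<in> {ccls g a, ccls g b}. finite S})"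
    by (simp add: sum_subtractf sumF sumG)
  finally have val: "(\<Sum>n\<in>Sup. int (card (cycles_of_size f n)) - int (card (cycles_of_size g n)))
     = int (card {S \<in> {ccls f a, ccls f b}. finite S}) - int (card {S \<in> {ccls g a, ccls g b}. finite S})" .
  have E: "int (card {S \<in> {ccls f a, ccls f b}. finite S}) - int (card {S \<in> {ccls g a, ccls g b}. finite S}) \<in> {-1, 1}"
    unfolding g_def by (rule E_case[OF inj assms(7) one])
  show ?thesis
    unfolding g_def[symmetric] Sup' Sup_def[symmetric]
    using fing fg' finSup val E cg' by (simp add: Sup_def)
qed

end
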